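(* Let $T:X\rightrightarrows X^*$ be a pseudomonotone operator and let $P(T)$ be the set of all maximal pseudomonotone operators $M:X\rightrightarrows X^*$ with $T\subset M$. Then (1) $T^\rho=\bigcup_{M\in P(T)}M$; (2) $T^{\rho\rho}=\bigcap_{M\in P(T)}M$; (3) $T$ is maximal pseudomonotone if and only if $T=T^\rho$.
   Context: $X$ is a real Banach space with dual $X^*$ and pairing $\langle x,x^*\rangle=x^*(x)$. A multivalued operator $T:X\rightrightarrows X^*$ is identified with its graph $T\subset X\times X^*$. For $(x,x^* ),(y,y^* )\in X\times X^*$, write $(x,x^* )\sim_p(y,y^* )$ if either $\min\{\langle x-y,y^*\rangle,\langle y-x,x^*\rangle\}<0$ or $\langle x-y,y^*\rangle=\langle y-x,x^*\rangle=0$. The pseudomonotone polar of $T$ is $T^\rho=\{(x,x^* )\in X\times X^*: (x,x^* )\sim_p(y,y^* )\ \forall (y,y^* )\in T\}$, and $T^{\rho\rho}=(T^\rho)^\rho$. $T$ is pseudomonotone if for all $(x,x^* ),(y,y^* )\in T$, $\langle y-x,x^*\rangle\ge0$ implies $\langle y-x,y^*\rangle\ge0$. $T$ is maximal pseudomonotone if it is pseudomonotone and for every pseudomonotone $S$ with $T\subset S$ one has $S=T$. *)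

theory Defs
  imports "HOL-Analysis.Analysis"
begin

text \<open>A multivalued operator is identified
with its graph, a subset of X \<times> X*.\<close>

type_synonym 'a operator = "('a \<times> ('a \<Rightarrow>\<^sub>L real)) set"

definition pairing :: "'a::banach \<Rightarrow> ('a \<Rightarrow>\<^sub>L real) \<Rightarrow> real" where
  "pairing x xs = blinfun_apply xs x"

definition sim_p :: "'a::banach \<times> ('a \<Rightarrow>\<^sub>L real) \<Rightarrow> 'a \<times> ('a \<Rightarrow>\<^sub>L real) \<Rightarrow> bool" where
  "sim_p p q = (case p of (x, xs) \<Rightarrow> case q of (y, ys) \<Rightarrow>
      min (pairing (x - y) ys) (pairing (y - x) xs) < 0 \<or>
      (pairing (x - y) ys = 0 \<and> pairing (y - x) xs = 0))"

definition pseudomonotone_polar :: "'a::banach operator \<Rightarrow> 'a operator" where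
  "pseudomonotone_polar T = {p. \<forall>q\<in>T. sim_p p q}"

definition pseudomonotone :: "'a::banach operator \<Rightarrow> bool" where
  "pseudomonotone T = (\<forall>(x, xs)\<in>T. \<forall>(y, ys)\<in>T.
      pairing (y - x) xs \<ge> 0 \<longrightarrow> pairing (y - x) ys \<ge> 0)"

definition maximal_pseudomonotone :: "'a::banach operator \<Rightarrow> bool" where
  "maximal_pseudomonotone T = (pseudomonotone T \<and>
      (\<forall>S. pseudomonotone S \<and> T \<subseteq> S \<longrightarrow> S = T))"

definition maximal_extensions :: "'a::banach operator \<Rightarrow> 'a operator set" where
  "maximal_extensions T = {M. maximal_pseudomonotone M \<and> T \<subseteq> M}"

end

theory Submission
  imports Defs
begin

lemma pair_neg: "pairing (x - y) (xs::'a::banach \<Rightarrow>\<^sub>L real) = - pairing (y - x) xs"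
  by (simp add: pairing_def blinfun.diff_right)
lemma aux: "(min a b < 0 \<or> (a = 0 \<and> b = 0)) \<longleftrightarrow> ((b \<ge> 0 \<longrightarrow> -a \<ge> 0) \<and> (a \<ge> 0 \<longrightarrow> -b \<ge> 0))" for a b :: real
  by (auto simp: min_def)
lemma sim_iff: "sim_p (x,xs) (y,ys) \<longleftrightarrow> ((pairing (y-x) xs \<ge> 0 \<longrightarrow> pairing (y-x) ys \<ge> 0) \<and> (pairing (x-y) ys \<ge> 0 \<longrightarrow> pairing (x-y) xs \<ge> 0))"
proof -
  have 3: "pairing (y - x) ys = - pairing (x - y) ys" "pairing (x - y) xs = - pairing (y - x) xs"
    by (rule pair_neg)+
  show ?thesis unfolding sim_p_def prod.case 3 by (rule aux)
qed

lemma sim_p_sym: "sim_p p q = sim_p q p"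
  by (cases p; cases q) (auto simp: sim_p_def)

lemma sim_p_refl: "sim_p p p"
  by (cases p) (auto simp: sim_p_def pairing_def)

lemma pm_iff: "pseudomonotone S \<longleftrightarrow> (\<forall>p\<in>S. \<forall>q\<in>S. sim_p p q)"
proof
  assume H: "pseudomonotone S"
  show "\<forall>p\<in>S. \<forall>q\<in>S. sim_p p q"
  proof (intro ballI)
    fix p q assume p: "p \<in> S" and q: "q \<in> S"
    obtain x xs where px: "p = (x, xs)" by (cases p)
    obtain y ys where qy: "q = (y, ys)" by (cases q)
    show "sim_p p q" unfolding px qy sim_iff
      using H p q unfolding px qy pseudomonotone_def by fast
  qed
next
  assume H: "\<forall>p\<in>S. \<forall>q\<in>S. sim_p p q"
  show "pseudomonotone S" unfolding pseudomonotone_def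
  proof (clarify)
    fix x xs y ys assume p: "(x, xs) \<in> S" and q: "(y, ys) \<in> S" and g: "pairing (y - x) xs \<ge> 0"
    have s: "sim_p (x, xs) (y, ys)" using H p q by blast
    thus "pairing (y - x) ys \<ge> 0" using g unfolding sim_iff by blast
  qed
qed

lemma extend_max:
  assumes "pseudomonotone S"
  shows "\<exists>M. maximal_pseudomonotone M \<and> S \<subseteq> M"
proof -
  let ?A = "{U. pseudomonotone U \<and> S \<subseteq> U}"
  have "\<forall>C\<in>chains ?A. \<exists>U\<in>?A. \<forall>X\<in>C. X \<subseteq> U"
  proof
    fix C assume C: "C \<in> chains ?A"
    show "\<exists>U\<in>?A. \<forall>X\<in>C. X \<subseteq> U"
    proof (cases "C = {}")
      case True thus ?thesis using assms by auto
    next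
      case False
      have "pseudomonotone (\<Union>C)" unfolding pm_iff
      proof (intro ballI)
        fix p q assume "p \<in> \<Union>C" "q \<in> \<Union>C"
        then obtain X Y where X: "X \<in> C" "p \<in> X" and Y: "Y \<in> C" "q \<in> Y" by auto
        have "X \<subseteq> Y \<or> Y \<subseteq> X" using C X Y unfolding chains_def chain_subset_def by blast
        moreover have "pseudomonotone X" "pseudomonotone Y" using C X Y unfolding chains_def by auto
        ultimately show "sim_p p q" using X Y unfolding pm_iff by blast
      qed
      moreover have "S \<subseteq> \<Union>C" using False C unfolding chains_def by auto
      ultimately show ?thesis by blast
    qed
  qed
  then obtain M where M: "M \<in> ?A" "\<forall>X\<in>?A. M \<subseteq> X \<longrightarrow> X = M"
    using Zorn_Lemma2[of ?A] by blast
  hence "maximal_pseudomonotone M" unfolding maximal_pseudomonotone_def by auto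
  thus ?thesis using M by blast
qed

theorem mainTheorem9:
  fixes T :: "'a::banach operator"
  assumes "pseudomonotone T"
  shows "pseudomonotone_polar T = \<Union> (maximal_extensions T) \<and>
         pseudomonotone_polar (pseudomonotone_polar T) = \<Inter> (maximal_extensions T) \<and>
         (maximal_pseudomonotone T \<longleftrightarrow> T = pseudomonotone_polar T)"
proof -
  have P1: "pseudomonotone_polar T = \<Union> (maximal_extensions T)"
  proof
    show "pseudomonotone_polar T \<subseteq> \<Union> (maximal_extensions T)"
    proof
      fix p assume p: "p \<in> pseudomonotone_polar T"
      have "pseudomonotone (insert p T)" unfolding pm_iff
        using p assms unfolding pm_iff pseudomonotone_polar_def by (blast intro: sim_p_refl sim_p_sym[THEN iffD1])
      then obtain M where "maximal_pseudomonotone M" "insert p T \<subseteq> M" using extend_max by blast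
      thus "p \<in> \<Union> (maximal_extensions T)" unfolding maximal_extensions_def by auto
    qed
  next
    show "\<Union> (maximal_extensions T) \<subseteq> pseudomonotone_polar T"
      unfolding maximal_extensions_def maximal_pseudomonotone_def pseudomonotone_polar_def pm_iff
      by blast
  qed
  have P2: "pseudomonotone_polar (pseudomonotone_polar T) = \<Inter> (maximal_extensions T)"
  proof
    show "pseudomonotone_polar (pseudomonotone_polar T) \<subseteq> \<Inter> (maximal_extensions T)"
    proof
      fix z assume z: "z \<in> pseudomonotone_polar (pseudomonotone_polar T)"
      show "z \<in> \<Inter> (maximal_extensions T)"
      proof
        fix M assume M: "M \<in> maximal_extensions T"
        have MS: "M \<subseteq> pseudomonotone_polar T" using M P1 by blast
        have Mp: "pseudomonotone M" using M unfolding maximal_extensions_def maximal_pseudomonotone_def by auto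
        have "pseudomonotone (insert z M)" unfolding pm_iff
          using z MS Mp unfolding pm_iff pseudomonotone_polar_def by (blast intro: sim_p_refl sim_p_sym[THEN iffD1])
        hence "insert z M = M" using M unfolding maximal_extensions_def maximal_pseudomonotone_def by blast
        thus "z \<in> M" by blast
      qed
    qed
  next
    show "\<Inter> (maximal_extensions T) \<subseteq> pseudomonotone_polar (pseudomonotone_polar T)"
    proof
      fix z assume z: "z \<in> \<Inter> (maximal_extensions T)"
      show "z \<in> pseudomonotone_polar (pseudomonotone_polar T)"
        unfolding pseudomonotone_polar_def[of "pseudomonotone_polar T"]
      proof (clarify)
        fix q assume "q \<in> pseudomonotone_polar T"
        then obtain M where M: "M \<in> maximal_extensions T" "q \<in> M" using P1 by blast
        have "z \<in> M" using z M by blast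
        moreover have "pseudomonotone M" using M unfolding maximal_extensions_def maximal_pseudomonotone_def by auto
        ultimately show "sim_p z q" using M unfolding pm_iff by blast
      qed
    qed
  qed
  have TT: "T \<subseteq> pseudomonotone_polar T" using assms unfolding pm_iff pseudomonotone_polar_def by blast
  have P3: "maximal_pseudomonotone T \<longleftrightarrow> T = pseudomonotone_polar T"
  proof
    assume m: "maximal_pseudomonotone T"
    have "\<Union> (maximal_extensions T) \<subseteq> T"
      using m unfolding maximal_extensions_def maximal_pseudomonotone_def by blast
    thus "T = pseudomonotone_polar T" using TT P1 by blast
  next
    assume e: "T = pseudomonotone_polar T"
    have "\<forall>S. pseudomonotone S \<and> T \<subseteq> S \<longrightarrow> S = T"
    proof (intro allI impI)
      fix S assume "pseudomonotone S \<and> T \<subseteq> S"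
      hence S: "pseudomonotone S" "T \<subseteq> S" by auto
      have "S \<subseteq> pseudomonotone_polar T" using S unfolding pm_iff pseudomonotone_polar_def by blast
      thus "S = T" using e S by blast
    qed
    thus "maximal_pseudomonotone T" using assms unfolding maximal_pseudomonotone_def by blast
  qed
  show ?thesis using P1 P2 P3 by blast
qed

end
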